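(* Let $q$ be a positive integer, $Z>0$, $\gamma:=(6\pi^2/q)^{2/3}$. For every $\tau\in\mathcal{J}$, $\mathcal{E}_{\mathrm{mTF}}(\tau^* )\le\mathcal{E}_{\mathrm{mTF}}(\tau)$, where $\tau^*$ is the symmetric decreasing rearrangement of $\tau$.
   Context: $\mathcal{J}:=\{\tau\in L^1(\mathbb{R}^3,(1+\xi^2)\mathrm{d}\xi):\tau\ge0\}$, and $\mathcal{E}_{\mathrm{mTF}}(\tau)=\int_{\mathbb{R}^3}\xi^2\tau(\xi)\,\mathrm{d}\xi-\tfrac32\gamma^{-1/2}Z\int_{\mathbb{R}^3}\tau(\xi)^{2/3}\,\mathrm{d}\xi+\tfrac34\gamma^{-1/2}\iint\big(\tau_<(\xi,\xi')\tau_>(\xi,\xi')^{2/3}-\tfrac15\tau_<(\xi,\xi')^{5/3}\big)\mathrm{d}\xi\,\mathrm{d}\xi'$, with $\tau_<=\min\{\tau(\xi),\tau(\xi')\}$, $\tau_>=\max\{\tau(\xi),\tau(\xi')\}$. *)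

theory Defs
  imports "HOL-Analysis.Analysis"
begin

type_synonym R3 = "real ^ 3"

definition J_class :: "(R3 \<Rightarrow> real) set" where
  "J_class = {\<tau>. (\<forall>\<xi>. \<tau> \<xi> \<ge> 0) \<and> integrable lborel (\<lambda>\<xi>. (1 + (norm \<xi>)\<^sup>2) * \<tau> \<xi>)}"

definition sym_rearr_set :: "R3 set \<Rightarrow> R3 set" where
  "sym_rearr_set A =
     (if emeasure lborel A = \<infinity> then UNIV
      else ball 0 (SOME r. r \<ge> 0 \<and> emeasure lborel (ball (0::R3) r) = emeasure lborel A))"

definition sym_dec_rearr :: "(R3 \<Rightarrow> real) \<Rightarrow> (R3 \<Rightarrow> real)" where
  "sym_dec_rearr f = (\<lambda>x. enn2real (\<integral>\<^sup>+ t. indicator {0<..} t *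
       indicator (sym_rearr_set {y. \<bar>f y\<bar> > t}) x \<partial>lborel))"

definition E_mTF :: "real \<Rightarrow> real \<Rightarrow> (R3 \<Rightarrow> real) \<Rightarrow> real" where
  "E_mTF \<gamma> Z \<tau> =
     (\<integral>\<xi>. (norm \<xi>)\<^sup>2 * \<tau> \<xi> \<partial>lborel)
     - 3/2 * \<gamma> powr (-1/2) * Z * (\<integral>\<xi>. \<tau> \<xi> powr (2/3) \<partial>lborel)
     + 3/4 * \<gamma> powr (-1/2) *
       (\<integral>p. (min (\<tau> (fst p)) (\<tau> (snd p)) * max (\<tau> (fst p)) (\<tau> (snd p)) powr (2/3)
              - 1/5 * min (\<tau> (fst p)) (\<tau> (snd p)) powr (5/3)) \<partial>(lborel \<Otimes>\<^sub>M lborel))"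

end

theory Submission
  imports Defs
begin

definition nu :: "(R3 \<Rightarrow> real) \<Rightarrow> real measure" where
  "nu \<phi> = distr (density lborel (\<lambda>x. indicator {x. 0 < \<phi> x} x)) borel (\<lambda>x. ln (\<phi> x))"

lemma sets_nu[simp]: "sets (nu \<phi>) = sets borel" by (simp add: nu_def)

lemma emeasure_nu_Ioc:
  assumes [measurable]: "\<phi> \<in> borel_measurable lborel"
  shows "emeasure (nu \<phi>) {a<..b} = emeasure lborel {x. exp a < \<phi> x \<and> \<phi> x \<le> exp b}"
proof -
  have "emeasure (nu \<phi>) {a<..b} = emeasure (density lborel (\<lambda>x. indicator {x. 0 < \<phi> x} x)) ((\<lambda>x. ln (\<phi> x)) -` {a<..b})"
    unfolding nu_def by (subst emeasure_distr) auto
  also have "\<dots> = (\<integral>\<^sup>+x. indicator {x. 0 < \<phi> x} x * indicator ((\<lambda>x. ln (\<phi> x)) -` {a<..b}) x \<partial>lborel)"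
  proof (subst emeasure_density)
    have "(\<lambda>x. ln (\<phi> x)) -` {a<..b} = {x. a < ln (\<phi> x) \<and> ln (\<phi> x) \<le> b}" by auto
    also have "\<dots> \<in> sets lborel" by measurable
    finally show "(\<lambda>x. ln (\<phi> x)) -` {a<..b} \<in> sets lborel" .
  qed auto
  also have "\<dots> = (\<integral>\<^sup>+x. indicator {x. exp a < \<phi> x \<and> \<phi> x \<le> exp b} x \<partial>lborel)"
  proof (rule nn_integral_cong)
    fix x
    show "indicator {x. 0 < \<phi> x} x * indicator ((\<lambda>x. ln (\<phi> x)) -` {a<..b}) x
         = (indicator {x. exp a < \<phi> x \<and> \<phi> x \<le> exp b} x :: ennreal)"
    proof (cases "0 < \<phi> x")
      case True
      have 1: "a < ln (\<phi> x) \<longleftrightarrow> exp a < \<phi> x" using True by (metis exp_less_cancel_iff exp_ln)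
      have 2: "ln (\<phi> x) \<le> b \<longleftrightarrow> \<phi> x \<le> exp b" using True by (metis exp_le_cancel_iff exp_ln)
      show ?thesis using True 1 2 by (auto simp: indicator_def)
    next
      case False
      then show ?thesis by (auto simp: indicator_def) (smt (verit) exp_gt_zero)+
    qed
  qed
  also have "\<dots> = emeasure lborel {x. exp a < \<phi> x \<and> \<phi> x \<le> exp b}"
    by (subst nn_integral_indicator) auto
  finally show ?thesis .
qed

lemma nu_eq:
  assumes [measurable]: "\<phi> \<in> borel_measurable lborel" "\<psi> \<in> borel_measurable lborel"
    and eq: "\<And>t. t > 0 \<Longrightarrow> emeasure lborel {x. \<phi> x > t} = emeasure lborel {x. \<psi> x > t}"
    and fin: "\<And>t. t > 0 \<Longrightarrow> emeasure lborel {x. \<phi> x > t} \<noteq> \<infinity>"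
  shows "nu \<phi> = nu \<psi>"
proof -
  have fin': "emeasure lborel {x. \<psi> x > t} \<noteq> \<infinity>" if "t > 0" for t using eq[OF that] fin[OF that] by simp
  have key: "emeasure lborel {x. exp a < f x \<and> f x \<le> exp b} =
     (if a < b then emeasure lborel {x. f x > exp a} - emeasure lborel {x. f x > exp b} else 0)"
    if [measurable]: "f \<in> borel_measurable lborel" and ff: "\<And>t. t > 0 \<Longrightarrow> emeasure lborel {x. f x > t} \<noteq> \<infinity>" for f :: "R3 \<Rightarrow> real" and a b :: real
  proof (cases "a < b")
    case True
    have "{x. exp a < f x \<and> f x \<le> exp b} = {x. f x > exp a} - {x. f x > exp b}" by (auto simp: not_less)
    moreover have "emeasure lborel ({x. f x > exp a} - {x. f x > exp b}) = emeasure lborel {x. f x > exp a} - emeasure lborel {x. f x > exp b}"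
      using True by (intro emeasure_Diff ff) (auto, smt (verit) exp_less_mono)
    ultimately show ?thesis using True by simp
  next
    case False
    then have "{x. exp a < f x \<and> f x \<le> exp b} = {}" by (auto, smt (verit) exp_le_cancel_iff)
    then show ?thesis using False by (simp del: Collect_empty_eq)
  qed
  show ?thesis
  proof (rule measure_eqI_generator_eq[where \<Omega>=UNIV and E="range (\<lambda>(a, b). {a<..b::real})" and A="\<lambda>i. {- real (i::nat)<..real i}"])
    fix X assume "X \<in> range (\<lambda>(a, b). {a<..b::real})"
    then obtain a b where Xeq: "X = {a<..b}" by auto
    show "emeasure (nu \<phi>) X = emeasure (nu \<psi>) X"
      unfolding Xeq emeasure_nu_Ioc[OF assms(1)] emeasure_nu_Ioc[OF assms(2)]
      using key[OF assms(1) fin] key[OF assms(2) fin'] eq by simp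
  next
    show "(\<Union>i. {- real (i::nat)<..real i}) = UNIV"
      by auto (metis le_less_trans minus_minus neg_less_iff_less not_le real_arch_simple
            of_nat_0_le_iff reals_Archimedean2)
  next
    fix i :: nat
    have "emeasure (nu \<phi>) {- real i<..real i} \<le> emeasure lborel {x. \<phi> x > exp (- real i)}"
      unfolding emeasure_nu_Ioc[OF assms(1)] by (intro emeasure_mono) auto
    also have "\<dots> < \<infinity>" using fin[of "exp (- real i)"] by (simp add: less_top)
    finally show "emeasure (nu \<phi>) {- real i<..real i} \<noteq> \<infinity>" by simp
  qed (auto simp: borel_sigma_sets_Ioc Int_stable_def)
qed

lemma nn_integral_nu:
  fixes \<phi> :: "R3 \<Rightarrow> real" and G :: "real \<Rightarrow> ennreal"
  assumes [measurable]: "\<phi> \<in> borel_measurable lborel" "G \<in> borel_measurable borel"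
    and G0: "G 0 = 0" and nn: "\<And>x. \<phi> x \<ge> 0"
  shows "(\<integral>\<^sup>+x. G (\<phi> x) \<partial>lborel) = (\<integral>\<^sup>+u. G (exp u) \<partial>nu \<phi>)"
proof -
  have "(\<integral>\<^sup>+u. G (exp u) \<partial>nu \<phi>) = (\<integral>\<^sup>+x. G (exp (ln (\<phi> x))) \<partial>density lborel (\<lambda>x. indicator {x. 0 < \<phi> x} x))"
    unfolding nu_def by (subst nn_integral_distr) auto
  also have "\<dots> = (\<integral>\<^sup>+x. indicator {x. 0 < \<phi> x} x * G (exp (ln (\<phi> x))) \<partial>lborel)"
    by (subst nn_integral_density) auto
  also have "\<dots> = (\<integral>\<^sup>+x. G (\<phi> x) \<partial>lborel)"
  proof (rule nn_integral_cong)
    fix x show "indicator {x. 0 < \<phi> x} x * G (exp (ln (\<phi> x))) = G (\<phi> x)"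
      using nn[of x] G0 by (cases "\<phi> x = 0") (auto simp: indicator_def)
  qed
  finally show ?thesis by simp
qed

lemma nn_integral_transfer:
  fixes \<phi> \<psi> :: "R3 \<Rightarrow> real" and G :: "real \<Rightarrow> ennreal"
  assumes [measurable]: "\<phi> \<in> borel_measurable lborel" "\<psi> \<in> borel_measurable lborel" "G \<in> borel_measurable borel"
    and G0: "G 0 = 0" and nn: "\<And>x. \<phi> x \<ge> 0" "\<And>x. \<psi> x \<ge> 0"
    and eq: "\<And>t. t > 0 \<Longrightarrow> emeasure lborel {x. \<phi> x > t} = emeasure lborel {x. \<psi> x > t}"
    and fin: "\<And>t. t > 0 \<Longrightarrow> emeasure lborel {x. \<phi> x > t} \<noteq> \<infinity>"
  shows "(\<integral>\<^sup>+x. G (\<phi> x) \<partial>lborel) = (\<integral>\<^sup>+x. G (\<psi> x) \<partial>lborel)"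
  using nn_integral_nu[of \<phi> G] nn_integral_nu[of \<psi> G] nu_eq[of \<phi> \<psi>] assms by simp

lemma nn_integral_pair_transfer:
  fixes \<phi> \<psi> :: "R3 \<Rightarrow> real" and F :: "real \<Rightarrow> real \<Rightarrow> ennreal"
  assumes [measurable]: "\<phi> \<in> borel_measurable lborel" "\<psi> \<in> borel_measurable lborel"
    and Fm: "(\<lambda>p. F (fst p) (snd p)) \<in> borel_measurable (borel \<Otimes>\<^sub>M borel)"
    and F0: "\<And>b. F 0 b = 0" "\<And>a. F a 0 = 0" and nn: "\<And>x. \<phi> x \<ge> 0" "\<And>x. \<psi> x \<ge> 0"
    and eq: "\<And>t. t > 0 \<Longrightarrow> emeasure lborel {x. \<phi> x > t} = emeasure lborel {x. \<psi> x > t}"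
    and fin: "\<And>t. t > 0 \<Longrightarrow> emeasure lborel {x. \<phi> x > t} \<noteq> \<infinity>"
  shows "(\<integral>\<^sup>+p. F (\<phi> (fst p)) (\<phi> (snd p)) \<partial>(lborel \<Otimes>\<^sub>M lborel)) =
         (\<integral>\<^sup>+p. F (\<psi> (fst p)) (\<psi> (snd p)) \<partial>(lborel \<Otimes>\<^sub>M lborel))"
proof -
  have Fc[measurable]: "(\<lambda>x. F (f x) (g x)) \<in> borel_measurable M"
    if "f \<in> borel_measurable M" "g \<in> borel_measurable M" for f g and M :: "'z measure"
    using measurable_compose[OF measurable_Pair[OF that] Fm] by simp
  define H where "H a = (\<integral>\<^sup>+y. F a (\<phi> y) \<partial>lborel)" for a
  have Hm[measurable]: "H \<in> borel_measurable borel"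
    unfolding H_def by (rule lborel.borel_measurable_nn_integral) (simp add: split_beta')
  have H0: "H 0 = 0" unfolding H_def using F0 by simp
  have Hpsi: "H a = (\<integral>\<^sup>+y. F a (\<psi> y) \<partial>lborel)" for a
    unfolding H_def by (rule nn_integral_transfer) (use assms in auto)
  have split: "(\<integral>\<^sup>+p. F (kk (fst p)) (kk (snd p)) \<partial>(lborel \<Otimes>\<^sub>M lborel)) = (\<integral>\<^sup>+x. (\<integral>\<^sup>+y. F (kk x) (kk y) \<partial>lborel) \<partial>lborel)"
    if [measurable]: "kk \<in> borel_measurable lborel" for kk :: "R3 \<Rightarrow> real"
    by (subst lborel.nn_integral_fst[symmetric]) auto
  have "(\<integral>\<^sup>+p. F (\<phi> (fst p)) (\<phi> (snd p)) \<partial>(lborel \<Otimes>\<^sub>M lborel)) = (\<integral>\<^sup>+x. H (\<phi> x) \<partial>lborel)"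
    unfolding split[OF assms(1)] H_def ..
  also have "\<dots> = (\<integral>\<^sup>+x. H (\<psi> x) \<partial>lborel)"
    by (rule nn_integral_transfer) (use assms H0 in auto)
  also have "\<dots> = (\<integral>\<^sup>+p. F (\<psi> (fst p)) (\<psi> (snd p)) \<partial>(lborel \<Otimes>\<^sub>M lborel))"
    unfolding split[OF assms(2)] Hpsi ..
  finally show ?thesis .
qed

definition cst :: real where "cst = unit_ball_vol (real DIM(R3))"

lemma cst_pos: "cst > 0" unfolding cst_def by simp

lemma emeasure_ball0: "r \<ge> 0 \<Longrightarrow> emeasure lborel (ball (0::R3) r) = ennreal (cst * r ^ 3)"
  unfolding cst_def using emeasure_ball[of r "0::R3"] by simp

context
  fixes \<tau> :: "R3 \<Rightarrow> real"
  assumes \<tau>J: "\<tau> \<in> J_class"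
begin

lemma tau_nn: "\<tau> x \<ge> 0" using \<tau>J unfolding J_class_def by auto

lemma tau_int_w: "integrable lborel (\<lambda>\<xi>. (1 + (norm \<xi>)\<^sup>2) * \<tau> \<xi>)" using \<tau>J unfolding J_class_def by auto

lemma tau_meas[measurable]: "\<tau> \<in> borel_measurable lborel"
proof -
  have g: "(\<lambda>\<xi>. (1 + (norm \<xi>)\<^sup>2) * \<tau> \<xi>) \<in> borel_measurable lborel"
    using borel_measurable_integrable[OF tau_int_w] .
  have d: "(\<lambda>\<xi>::R3. 1 + (norm \<xi>)\<^sup>2) \<in> borel_measurable lborel" by measurable
  have "(\<lambda>\<xi>. ((1 + (norm \<xi>)\<^sup>2) * \<tau> \<xi>) / (1 + (norm \<xi>)\<^sup>2)) \<in> borel_measurable lborel"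
    by (rule borel_measurable_divide[OF g d])
  moreover have "(\<lambda>\<xi>. ((1 + (norm \<xi>)\<^sup>2) * \<tau> \<xi>) / (1 + (norm \<xi>)\<^sup>2)) = \<tau>"
  proof (rule ext)
    fix \<xi> :: R3
    have "1 + (norm \<xi>)\<^sup>2 \<noteq> 0" using zero_le_power2[of "norm \<xi>"] by linarith
    then show "((1 + (norm \<xi>)\<^sup>2) * \<tau> \<xi>) / (1 + (norm \<xi>)\<^sup>2) = \<tau> \<xi>" by simp
  qed
  ultimately show ?thesis by simp
qed

lemma tau_int: "integrable lborel \<tau>"
proof (rule Bochner_Integration.integrable_bound[OF tau_int_w])
  show "AE x in lborel. norm (\<tau> x) \<le> norm ((1 + (norm x)\<^sup>2) * \<tau> x)"
  proof (rule AE_I2)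
    fix x :: R3
    have "1 * \<tau> x \<le> (1 + (norm x)\<^sup>2) * \<tau> x"
      by (rule mult_right_mono) (use tau_nn[of x] zero_le_power2[of "norm x"] in linarith)+
    then show "norm (\<tau> x) \<le> norm ((1 + (norm x)\<^sup>2) * \<tau> x)" using tau_nn[of x] by simp
  qed
qed (rule tau_meas)

definition Itau where "Itau = (\<integral>x. \<tau> x \<partial>lborel)"

lemma Itau_nn: "Itau \<ge> 0" unfolding Itau_def by (simp add: tau_nn)

lemma markov: "t > 0 \<Longrightarrow> emeasure lborel {x. \<tau> x > t} \<le> ennreal (Itau / t)"
proof -
  assume t: "t > 0"
  have "emeasure lborel {x. \<tau> x > t} \<le> emeasure lborel {x\<in>space lborel. \<tau> x \<ge> t}"
    by (intro emeasure_mono) auto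
  also have "\<dots> \<le> (1/t) * (\<integral>x. \<tau> x \<partial>lborel)"
    by (rule integral_Markov_inequality) (use t tau_int tau_nn in auto)
  finally show ?thesis unfolding Itau_def by simp
qed

lemma fin: "t > 0 \<Longrightarrow> emeasure lborel {x. \<tau> x > t} \<noteq> \<infinity>"
proof -
  assume a: "t > 0"
  have "emeasure lborel {x. \<tau> x > t} < top"
    using order.strict_trans1[OF markov[OF a] ennreal_less_top] .
  then show ?thesis by (simp add: infinity_ennreal_def less_top)
qed

definition mu where "mu t = measure lborel {x. \<tau> x > t}"

lemma emeasure_mu: "t > 0 \<Longrightarrow> emeasure lborel {x. \<tau> x > t} = ennreal (mu t)"
  unfolding mu_def using fin by (simp add: emeasure_eq_ennreal_measure)

lemma mu_nn: "mu t \<ge> 0" unfolding mu_def by simp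

lemma mu_markov: "t > 0 \<Longrightarrow> mu t \<le> Itau / t"
proof -
  assume a: "t > 0"
  have "ennreal (mu t) \<le> ennreal (Itau / t)" using markov[OF a] emeasure_mu[OF a] by simp
  moreover have "0 \<le> Itau / t" using Itau_nn a by simp
  ultimately show ?thesis using ennreal_le_iff by blast
qed

lemma mu_mono: "0 < s \<Longrightarrow> s \<le> t \<Longrightarrow> mu t \<le> mu s"
proof -
  assume a: "0 < s" "s \<le> t"
  have "{x. \<tau> x > t} \<subseteq> {x. \<tau> x > s}" using a by auto
  moreover have "{x. \<tau> x > s} \<in> fmeasurable lborel" using fin[OF a(1)] by (simp add: fmeasurable_def less_top)
  moreover have "{x. \<tau> x > t} \<in> sets lborel" by measurable
  ultimately show ?thesis unfolding mu_def by (metis measure_mono_fmeasurable)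
qed

definition rho where "rho t = (SOME r. r \<ge> 0 \<and> emeasure lborel (ball (0::R3) r) = emeasure lborel {y. \<bar>\<tau> y\<bar> > t})"

lemma abs_set: "{y. \<bar>\<tau> y\<bar> > t} = {y. \<tau> y > t}" using tau_nn by (simp add: abs_of_nonneg)

lemma rho_prop: assumes "t > 0" shows "rho t \<ge> 0" "cst * rho t ^ 3 = mu t"
    "emeasure lborel (ball (0::R3) (rho t)) = emeasure lborel {y. \<tau> y > t}"
proof -
  define r where "r = root 3 (mu t / cst)"
  have r0: "r \<ge> 0" unfolding r_def using mu_nn cst_pos by simp
  have "r ^ 3 = mu t / cst" unfolding r_def using mu_nn cst_pos by (simp add: real_root_pow_pos2)
  then have "cst * r ^ 3 = mu t" using cst_pos by simp
  then have ex: "r \<ge> 0 \<and> emeasure lborel (ball (0::R3) r) = emeasure lborel {y. \<bar>\<tau> y\<bar> > t}"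
    using r0 emeasure_ball0[OF r0] emeasure_mu[OF assms] abs_set by simp
  have P: "rho t \<ge> 0 \<and> emeasure lborel (ball (0::R3) (rho t)) = emeasure lborel {y. \<bar>\<tau> y\<bar> > t}"
    unfolding rho_def by (rule someI[of _ r]) (rule ex)
  then show "rho t \<ge> 0" by simp
  from P show "emeasure lborel (ball (0::R3) (rho t)) = emeasure lborel {y. \<tau> y > t}" using abs_set by simp
  from P have "ennreal (cst * rho t ^ 3) = ennreal (mu t)"
    using emeasure_ball0[of "rho t"] emeasure_mu[OF assms] abs_set by simp
  then show "cst * rho t ^ 3 = mu t" using cst_pos mu_nn P by (simp add: ennreal_inj)
qed

lemma rho_mono: assumes "0 < s" "s \<le> t" shows "rho t \<le> rho s"
proof -
  have "cst * rho t ^ 3 \<le> cst * rho s ^ 3" using rho_prop mu_mono assms by auto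
  then have "rho t ^ 3 \<le> rho s ^ 3" using cst_pos by simp
  moreover have "rho s \<ge> 0" using rho_prop assms by auto
  ultimately show ?thesis
  proof (rule_tac ccontr)
    assume a: "rho t ^ 3 \<le> rho s ^ 3" "rho s \<ge> 0" "\<not> rho t \<le> rho s"
    then have "rho s ^ 3 < rho t ^ 3" using power_strict_mono[of "rho s" "rho t" 3] by simp
    with a show False by simp
  qed
qed

lemma sym_set: "t > 0 \<Longrightarrow> sym_rearr_set {y. \<bar>\<tau> y\<bar> > t} = ball 0 (rho t)"
proof -
  assume "t > 0"
  then have h: "\<not> emeasure lborel {y. \<bar>\<tau> y\<bar> > t} = \<infinity>" using fin abs_set by simp
  show ?thesis unfolding sym_rearr_set_def if_not_P[OF h] rho_def ..
qed

definition rho' where "rho' t = (if 0 < t then rho t else 0)"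

lemma rho'_meas[measurable]: "rho' \<in> borel_measurable borel"
proof -
  have "mono (\<lambda>u. - rho (exp u))"
    by (auto simp: mono_def intro!: rho_mono)
  then have m1: "(\<lambda>u. - rho (exp u)) \<in> borel_measurable borel" by (rule borel_measurable_mono)
  have m2: "(\<lambda>u. rho (exp u)) \<in> borel_measurable borel"
    using borel_measurable_uminus[OF m1] by simp
  have m3: "(\<lambda>t. rho (exp (ln t))) \<in> borel_measurable borel"
    by (rule measurable_compose[OF borel_measurable_ln[OF measurable_ident_sets[OF refl]] m2])
  have "(\<lambda>t. if 0 < t then rho (exp (ln t)) else 0) \<in> borel_measurable borel"
    by (rule measurable_If[OF m3]) auto
  moreover have "(\<lambda>t. if 0 < t then rho (exp (ln t)) else 0) = rho'"
    by (rule ext) (simp add: rho'_def)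
  ultimately show ?thesis by simp
qed

end

lemma bathtub:
  fixes A :: "R3 set" and r :: real
  assumes A[measurable]: "A \<in> sets lborel" and r: "r \<ge> 0"
    and eqm: "emeasure lborel A = emeasure lborel (ball (0::R3) r)"
  shows "(\<integral>\<^sup>+x. ennreal ((norm x)\<^sup>2) * indicator (ball (0::R3) r) x \<partial>lborel)
       \<le> (\<integral>\<^sup>+x. ennreal ((norm x)\<^sup>2) * indicator A x \<partial>lborel)"
proof -
  define B :: "R3 set" where "B = ball 0 r"
  have B[measurable]: "B \<in> sets lborel" unfolding B_def by simp
  have mB: "emeasure lborel B \<noteq> \<infinity>" unfolding B_def using emeasure_ball0[OF r] by simp
  have mA: "emeasure lborel A \<noteq> \<infinity>" using mB unfolding B_def by (simp add: eqm)
  have mAB: "emeasure lborel (A \<inter> B) \<noteq> \<infinity>"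
  proof -
    have "emeasure lborel (A \<inter> B) \<le> emeasure lborel B" by (rule emeasure_mono) (use B in auto)
    then show ?thesis using mB by (auto simp: top_unique)
  qed
  have d1: "emeasure lborel (B - A) = emeasure lborel B - emeasure lborel (A \<inter> B)"
  proof -
    have "B - A = B - (A \<inter> B)" by auto
    moreover have "A \<inter> B \<in> sets lborel" by simp
    ultimately show ?thesis using emeasure_Diff[OF mAB B] by auto
  qed
  have d2: "emeasure lborel (A - B) = emeasure lborel A - emeasure lborel (A \<inter> B)"
  proof -
    have "A - B = A - (A \<inter> B)" by auto
    moreover have "A \<inter> B \<in> sets lborel" by simp
    ultimately show ?thesis using emeasure_Diff[OF mAB A] by auto
  qed
  have deq: "emeasure lborel (B - A) = emeasure lborel (A - B)"
    using d1 d2 eqm unfolding B_def by simp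
  have BA: "B - A \<in> sets borel" "A - B \<in> sets borel" using A B by auto
  define g :: "R3 \<Rightarrow> ennreal" where "g x = ennreal ((norm x)\<^sup>2)" for x
  have g[measurable]: "g \<in> borel_measurable lborel" unfolding g_def by measurable
  have splitB: "(\<integral>\<^sup>+x. g x * indicator B x \<partial>lborel) =
      (\<integral>\<^sup>+x. g x * indicator (A \<inter> B) x \<partial>lborel) + (\<integral>\<^sup>+x. g x * indicator (B - A) x \<partial>lborel)"
  proof -
    have "(\<integral>\<^sup>+x. g x * indicator B x \<partial>lborel) = (\<integral>\<^sup>+x. g x * indicator (A \<inter> B) x + g x * indicator (B - A) x \<partial>lborel)"
      by (intro nn_integral_cong) (auto simp: indicator_def)
    also have "\<dots> = (\<integral>\<^sup>+x. g x * indicator (A \<inter> B) x \<partial>lborel) + (\<integral>\<^sup>+x. g x * indicator (B - A) x \<partial>lborel)"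
      by (rule nn_integral_add) auto
    finally show ?thesis .
  qed
  have splitA: "(\<integral>\<^sup>+x. g x * indicator A x \<partial>lborel) =
      (\<integral>\<^sup>+x. g x * indicator (A \<inter> B) x \<partial>lborel) + (\<integral>\<^sup>+x. g x * indicator (A - B) x \<partial>lborel)"
  proof -
    have "(\<integral>\<^sup>+x. g x * indicator A x \<partial>lborel) = (\<integral>\<^sup>+x. g x * indicator (A \<inter> B) x + g x * indicator (A - B) x \<partial>lborel)"
      by (intro nn_integral_cong) (auto simp: indicator_def)
    also have "\<dots> = (\<integral>\<^sup>+x. g x * indicator (A \<inter> B) x \<partial>lborel) + (\<integral>\<^sup>+x. g x * indicator (A - B) x \<partial>lborel)"
      by (rule nn_integral_add) auto
    finally show ?thesis .
  qed
  have up: "(\<integral>\<^sup>+x. g x * indicator (B - A) x \<partial>lborel) \<le> ennreal (r\<^sup>2) * emeasure lborel (B - A)"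
  proof -
    have "(\<integral>\<^sup>+x. g x * indicator (B - A) x \<partial>lborel) \<le> (\<integral>\<^sup>+x. ennreal (r\<^sup>2) * indicator (B - A) x \<partial>lborel)"
    proof (intro nn_integral_mono)
      fix x show "g x * indicator (B - A) x \<le> ennreal (r\<^sup>2) * indicator (B - A) x"
      proof (cases "x \<in> B")
        case True
        then have "norm x < r" unfolding B_def by simp
        then have "(norm x)\<^sup>2 \<le> r\<^sup>2" by (intro power_mono) auto
        then show ?thesis unfolding g_def by (auto simp: indicator_def)
      qed (auto simp: indicator_def)
    qed
    also have "\<dots> = ennreal (r\<^sup>2) * emeasure lborel (B - A)"
      by (rule nn_integral_cmult_indicator) (use BA in auto)
    finally show ?thesis .
  qed
  have low: "ennreal (r\<^sup>2) * emeasure lborel (A - B) \<le> (\<integral>\<^sup>+x. g x * indicator (A - B) x \<partial>lborel)"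
  proof -
    have "ennreal (r\<^sup>2) * emeasure lborel (A - B) = (\<integral>\<^sup>+x. ennreal (r\<^sup>2) * indicator (A - B) x \<partial>lborel)"
      by (rule nn_integral_cmult_indicator[symmetric]) (use BA in auto)
    also have "\<dots> \<le> (\<integral>\<^sup>+x. g x * indicator (A - B) x \<partial>lborel)"
    proof (intro nn_integral_mono)
      fix x show "ennreal (r\<^sup>2) * indicator (A - B) x \<le> g x * indicator (A - B) x"
      proof (cases "x \<notin> B")
        case True
        then have "r \<le> norm x" unfolding B_def by simp
        then have "r\<^sup>2 \<le> (norm x)\<^sup>2" using r by (intro power_mono) auto
        then show ?thesis unfolding g_def by (auto simp: indicator_def)
      qed (auto simp: indicator_def)
    qed
    finally show ?thesis .
  qed
  have "(\<integral>\<^sup>+x. g x * indicator B x \<partial>lborel) \<le> (\<integral>\<^sup>+x. g x * indicator A x \<partial>lborel)"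
  proof -
    have "(\<integral>\<^sup>+x. g x * indicator B x \<partial>lborel) \<le> (\<integral>\<^sup>+x. g x * indicator (A \<inter> B) x \<partial>lborel) + ennreal (r\<^sup>2) * emeasure lborel (B - A)"
      unfolding splitB by (rule add_left_mono[OF up])
    also have "\<dots> = (\<integral>\<^sup>+x. g x * indicator (A \<inter> B) x \<partial>lborel) + ennreal (r\<^sup>2) * emeasure lborel (A - B)"
      by (simp only: deq)
    also have "\<dots> \<le> (\<integral>\<^sup>+x. g x * indicator A x \<partial>lborel)"
      unfolding splitA by (rule add_left_mono[OF low])
    finally show ?thesis .
  qed
  then show ?thesis unfolding g_def B_def .
qed

context
  fixes \<tau> :: "R3 \<Rightarrow> real"
  assumes \<tau>J: "\<tau> \<in> J_class"
begin

lemmas rho'_eq = rho'_def[OF \<tau>J]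

definition Ix where "Ix x = {t. 0 < t \<and> norm x < rho' \<tau> t}"

definition ff where "ff x = emeasure lborel (Ix x)"

lemma Ix_sets[measurable]: "Ix x \<in> sets borel"
proof -
  note rho'_meas[OF \<tau>J, measurable]
  show ?thesis unfolding Ix_def by measurable
qed

lemma Ix_down: "t \<in> Ix x \<Longrightarrow> 0 < t' \<Longrightarrow> t' \<le> t \<Longrightarrow> t' \<in> Ix x"
  unfolding Ix_def rho'_eq using rho_mono[OF \<tau>J, of t' t] by auto

lemma rearr_eq: "sym_dec_rearr \<tau> x = enn2real (ff x)"
proof -
  have "(\<lambda>t. indicator {0<..} t * indicator (sym_rearr_set {y. \<bar>\<tau> y\<bar> > t}) x) = (indicator (Ix x) :: real \<Rightarrow> ennreal)"
  proof (rule ext)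
    fix t :: real
    show "indicator {0<..} t * indicator (sym_rearr_set {y. \<bar>\<tau> y\<bar> > t}) x = (indicator (Ix x) t :: ennreal)"
    proof (cases "t > 0")
      case True
      then show ?thesis unfolding sym_set[OF \<tau>J True] Ix_def rho'_eq by (auto simp: indicator_def)
    next
      case False
      then show ?thesis unfolding Ix_def by (auto simp: indicator_def)
    qed
  qed
  then show ?thesis unfolding sym_dec_rearr_def ff_def by (simp add: nn_integral_indicator)
qed

lemma ff_meas[measurable]: "ff \<in> borel_measurable lborel"
proof -
  note rho'_meas[OF \<tau>J, measurable]
  have "(\<lambda>p::R3 \<times> real. if 0 < snd p \<and> norm (fst p) < rho' \<tau> (snd p) then 1 else (0::ennreal)) \<in> borel_measurable (lborel \<Otimes>\<^sub>M lborel)"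
    by measurable
  then have m: "(\<lambda>x. \<integral>\<^sup>+t. (if 0 < t \<and> norm x < rho' \<tau> t then 1 else (0::ennreal)) \<partial>lborel) \<in> borel_measurable lborel"
    by (intro lborel.borel_measurable_nn_integral) (simp add: split_beta')
  have eqf: "ff = (\<lambda>x. \<integral>\<^sup>+t. (if 0 < t \<and> norm x < rho' \<tau> t then 1 else (0::ennreal)) \<partial>lborel)"
  proof (rule ext)
    fix x
    have "(\<integral>\<^sup>+t. (if 0 < t \<and> norm x < rho' \<tau> t then 1 else (0::ennreal)) \<partial>lborel) = (\<integral>\<^sup>+t. indicator (Ix x) t \<partial>lborel)"
      by (intro nn_integral_cong) (auto simp: Ix_def indicator_def)
    then show "ff x = (\<integral>\<^sup>+t. (if 0 < t \<and> norm x < rho' \<tau> t then 1 else (0::ennreal)) \<partial>lborel)"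
      unfolding ff_def by simp
  qed
  show ?thesis by (subst eqf) (rule m)
qed

lemma rearr_meas[measurable]: "sym_dec_rearr \<tau> \<in> borel_measurable lborel"
proof -
  have eqf: "sym_dec_rearr \<tau> = (\<lambda>x. enn2real (ff x))" by (rule ext) (simp add: rearr_eq)
  show ?thesis by (subst eqf) measurable
qed

lemma ff_ge: assumes "t0 > 0" "{0<..t0} \<subseteq> Ix x" shows "ennreal t0 \<le> ff x"
proof -
  have "ennreal t0 = emeasure lborel {0<..t0}" using assms by simp
  also have "\<dots> \<le> ff x" unfolding ff_def by (rule emeasure_mono[OF assms(2)]) simp
  finally show ?thesis .
qed

lemma ff_le: assumes "t0 \<ge> 0" "Ix x \<subseteq> {0<..t0}" shows "ff x \<le> ennreal t0"
proof -
  have "ff x \<le> emeasure lborel {0<..t0}" unfolding ff_def by (rule emeasure_mono[OF assms(2)]) simp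
  also have "\<dots> = ennreal t0" using assms by simp
  finally show ?thesis .
qed

lemma ff_gt_iff: assumes s: "s > 0" shows "s < ff x \<longleftrightarrow> (\<exists>n. norm x < rho \<tau> (s + 1 / Suc n))"
proof
  assume "\<exists>n. norm x < rho \<tau> (s + 1 / Suc n)"
  then obtain n where n: "norm x < rho \<tau> (s + 1 / Suc n)" by auto
  define t0 where "t0 = s + 1 / Suc n"
  have t0: "t0 > s" unfolding t0_def by simp
  have "{0<..t0} \<subseteq> Ix x"
  proof
    fix t assume t: "t \<in> {0<..t0}"
    have t0pos: "0 < t0" using t0 s by linarith
    have "t0 \<in> Ix x" unfolding Ix_def rho'_eq using n t0pos t0_def by simp
    then show "t \<in> Ix x" using Ix_down t by auto
  qed
  then have "ennreal t0 \<le> ff x" by (rule ff_ge[rotated]) (use t0 s in linarith)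
  moreover have "ennreal s < ennreal t0" using t0 s by (simp add: ennreal_less_iff)
  ultimately show "s < ff x" by simp
next
  assume gt: "s < ff x"
  show "\<exists>n. norm x < rho \<tau> (s + 1 / Suc n)"
  proof (rule ccontr)
    assume "\<not> (\<exists>n. norm x < rho \<tau> (s + 1 / Suc n))"
    then have le: "rho \<tau> (s + 1 / Suc n) \<le> norm x" for n using not_less by blast
    have "Ix x \<subseteq> {0<..s}"
    proof
      fix t assume t: "t \<in> Ix x"
      then have t0: "0 < t" "norm x < rho \<tau> t" unfolding Ix_def rho'_eq by auto
      show "t \<in> {0<..s}"
      proof (rule ccontr)
        assume "t \<notin> {0<..s}"
        then have "t > s" using t0 by auto
        then obtain n where n: "inverse (real (Suc n)) < t - s" using reals_Archimedean[of "t - s"] by auto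
        have i: "1 / real (Suc n) > 0" by simp
        have p: "0 < s + 1 / real (Suc n)" using s i by linarith
        have q: "s + 1 / real (Suc n) \<le> t" using n by (simp add: inverse_eq_divide)
        have "rho \<tau> t \<le> rho \<tau> (s + 1 / Suc n)"
          using rho_mono[OF \<tau>J p q] .
        then show False using le[of n] t0 by simp
      qed
    qed
    then have "ff x \<le> ennreal s" by (rule ff_le[rotated]) (use s in linarith)
    then show False using gt by simp
  qed
qed

end

context
  fixes \<tau> :: "R3 \<Rightarrow> real"
  assumes \<tau>J: "\<tau> \<in> J_class"
begin

lemma ff_fin: assumes x: "x \<noteq> 0" shows "ff \<tau> x < top"
proof -
  define r where "r = norm x"
  have r: "r > 0" unfolding r_def using x by simp
  define I where "I = Itau \<tau>"
  have I: "I \<ge> 0" unfolding I_def using Itau_nn[OF \<tau>J] .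
  define K where "K = cst * r ^ 3"
  have K: "K > 0" unfolding K_def using cst_pos r by simp
  define t0 where "t0 = (I + 1) / K"
  have t0: "t0 > 0" unfolding t0_def using I K by simp
  have "mu \<tau> t0 \<le> I / t0" unfolding I_def using mu_markov[OF \<tau>J t0] .
  also have "I / t0 = I * K / (I + 1)" unfolding t0_def using I K by (simp add: field_simps)
  also have "\<dots> < K" using I K by (simp add: divide_less_eq mult.commute)
  finally have "cst * rho \<tau> t0 ^ 3 < cst * r ^ 3" using rho_prop(2)[OF \<tau>J t0] unfolding K_def by simp
  then have "rho \<tau> t0 ^ 3 < r ^ 3" using cst_pos by simp
  then have rt0: "rho \<tau> t0 < r" using power_less_imp_less_base[of "rho \<tau> t0" 3 r] r by simp
  have "Ix \<tau> x \<subseteq> {0<..t0}"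
  proof
    fix t assume t: "t \<in> Ix \<tau> x"
    then have tt: "0 < t" "norm x < rho \<tau> t" unfolding Ix_def[OF \<tau>J] rho'_def[OF \<tau>J] by auto
    show "t \<in> {0<..t0}"
    proof (rule ccontr)
      assume "t \<notin> {0<..t0}"
      then have "t0 \<le> t" using tt by auto
      then have "rho \<tau> t \<le> rho \<tau> t0" using rho_mono[OF \<tau>J t0] by simp
      then show False using tt rt0 unfolding r_def by simp
    qed
  qed
  then have "ff \<tau> x \<le> ennreal t0" by (rule ff_le[OF \<tau>J, rotated]) (use t0 in linarith)
  also have "\<dots> < top" by simp
  finally show ?thesis .
qed

lemma level_eq: assumes s: "s > 0"
  shows "emeasure lborel {x. sym_dec_rearr \<tau> x > s} = emeasure lborel {x. \<tau> x > s}"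
proof -
  note [measurable] = tau_meas[OF \<tau>J] ff_meas[OF \<tau>J] rearr_meas[OF \<tau>J]
  define sn where "sn n = s + 1 / real (Suc n)" for n
  have sn_pos: "sn n > 0" for n unfolding sn_def using s by (simp add: add_pos_pos)
  have sn_mono: "m \<le> n \<Longrightarrow> sn n \<le> sn m" for m n unfolding sn_def by (simp add: frac_le)
  have U: "{x::R3. s < ff \<tau> x} = (\<Union>n. ball 0 (rho \<tau> (sn n)))"
    by (auto simp: ff_gt_iff[OF \<tau>J s] sn_def)
  have inc1: "incseq (\<lambda>n. ball (0::R3) (rho \<tau> (sn n)))"
  proof (unfold incseq_def, intro allI impI subsetI)
    fix m n :: nat and x :: R3 assume mn: "m \<le> n" and x: "x \<in> ball 0 (rho \<tau> (sn m))"
    have "rho \<tau> (sn m) \<le> rho \<tau> (sn n)" by (rule rho_mono[OF \<tau>J sn_pos sn_mono[OF mn]])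
    then show "x \<in> ball 0 (rho \<tau> (sn n))" using x by simp
  qed
  have inc2: "incseq (\<lambda>n. {x. \<tau> x > sn n})"
    unfolding incseq_def using sn_mono by (auto intro: order.strict_trans1)
  have U2: "(\<Union>n. {x. \<tau> x > sn n}) = {x. \<tau> x > s}"
  proof (intro equalityI subsetI)
    fix x assume "x \<in> (\<Union>n. {x. \<tau> x > sn n})"
    then obtain n where "\<tau> x > sn n" by auto
    moreover have "sn n > s" unfolding sn_def by simp
    ultimately show "x \<in> {x. \<tau> x > s}" by simp
  next
    fix x assume "x \<in> {x. \<tau> x > s}"
    then have "\<tau> x - s > 0" by simp
    then obtain n where n: "inverse (real (Suc n)) < \<tau> x - s" using reals_Archimedean by blast
    then have "\<tau> x > sn n" unfolding sn_def by (simp add: inverse_eq_divide)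
    then show "x \<in> (\<Union>n. {x. \<tau> x > sn n})" by auto
  qed
  have eqff: "emeasure lborel {x::R3. s < ff \<tau> x} = emeasure lborel {x. \<tau> x > s}"
  proof -
    have "emeasure lborel {x::R3. s < ff \<tau> x} = (SUP n. emeasure lborel (ball (0::R3) (rho \<tau> (sn n))))"
    proof -
      have "range (\<lambda>n. ball (0::R3) (rho \<tau> (sn n))) \<subseteq> sets lborel" by (auto simp: image_subset_iff)
      then show ?thesis unfolding U using SUP_emeasure_incseq[of "\<lambda>n. ball (0::R3) (rho \<tau> (sn n))" lborel] inc1 by simp
    qed
    also have "\<dots> = (SUP n. emeasure lborel {x. \<tau> x > sn n})"
      using rho_prop(3)[OF \<tau>J sn_pos] by simp
    also have "\<dots> = emeasure lborel (\<Union>n. {x. \<tau> x > sn n})"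
    proof -
      have "{x. \<tau> x > sn n} \<in> sets lborel" for n by measurable
      then have "range (\<lambda>n. {x. \<tau> x > sn n}) \<subseteq> sets lborel" by (auto simp: image_subset_iff)
      then show ?thesis using SUP_emeasure_incseq[of "\<lambda>n. {x. \<tau> x > sn n}" lborel] inc2 by simp
    qed
    finally show ?thesis unfolding U2 .
  qed
  have sub1: "{x. sym_dec_rearr \<tau> x > s} \<subseteq> {x::R3. s < ff \<tau> x}"
  proof
    fix x assume "x \<in> {x. sym_dec_rearr \<tau> x > s}"
    then have a: "enn2real (ff \<tau> x) > s" using rearr_eq[OF \<tau>J] by simp
    then have "ff \<tau> x \<noteq> top" using s by auto
    then have "ff \<tau> x = ennreal (enn2real (ff \<tau> x))" by (simp add: less_top)
    moreover have "ennreal s < ennreal (enn2real (ff \<tau> x))" using a s by (simp add: ennreal_less_iff)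
    ultimately show "x \<in> {x::R3. s < ff \<tau> x}" by simp
  qed
  have sub2: "{x::R3. s < ff \<tau> x} \<subseteq> {x. sym_dec_rearr \<tau> x > s} \<union> {0}"
  proof
    fix x assume x: "x \<in> {x::R3. s < ff \<tau> x}"
    show "x \<in> {x. sym_dec_rearr \<tau> x > s} \<union> {0}"
    proof (cases "x = 0")
      case False
      then have "ff \<tau> x < top" by (rule ff_fin)
      then have "ff \<tau> x = ennreal (enn2real (ff \<tau> x))" by simp
      with x have "ennreal s < ennreal (enn2real (ff \<tau> x))" by simp
      then have "s < enn2real (ff \<tau> x)" using ennreal_less_iff[of s "enn2real (ff \<tau> x)"] s by auto
      then show ?thesis using rearr_eq[OF \<tau>J] by simp
    qed simp
  qed
  have m1: "{x. sym_dec_rearr \<tau> x > s} \<in> sets lborel" by measurable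
  have "emeasure lborel {x. sym_dec_rearr \<tau> x > s} \<le> emeasure lborel {x::R3. s < ff \<tau> x}"
    by (rule emeasure_mono[OF sub1]) measurable
  moreover have "emeasure lborel {x::R3. s < ff \<tau> x} \<le> emeasure lborel ({x. sym_dec_rearr \<tau> x > s} \<union> {0})"
    by (rule emeasure_mono[OF sub2]) measurable
  moreover have "emeasure lborel ({x. sym_dec_rearr \<tau> x > s} \<union> {0}) = emeasure lborel {x. sym_dec_rearr \<tau> x > s}"
    by (rule emeasure_Un_null_set[OF m1]) (rule countable_imp_null_set_lborel, simp)
  ultimately show ?thesis using eqff by (metis antisym)
qed

end

context
  fixes \<tau> :: "R3 \<Rightarrow> real"
  assumes \<tau>J: "\<tau> \<in> J_class"
begin

lemma kinetic:
  "(\<integral>\<^sup>+x. ennreal ((norm x)\<^sup>2 * sym_dec_rearr \<tau> x) \<partial>lborel) \<le> (\<integral>\<^sup>+x. ennreal ((norm x)\<^sup>2 * \<tau> x) \<partial>lborel)"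
proof -
  note [measurable] = tau_meas[OF \<tau>J] ff_meas[OF \<tau>J] rearr_meas[OF \<tau>J] rho'_meas[OF \<tau>J]
  define k1 :: "R3 \<times> real \<Rightarrow> ennreal" where
    "k1 p = ennreal ((norm (fst p))\<^sup>2) * (if 0 < snd p \<and> norm (fst p) < rho' \<tau> (snd p) then 1 else 0)" for p
  define k2 :: "R3 \<times> real \<Rightarrow> ennreal" where
    "k2 p = ennreal ((norm (fst p))\<^sup>2) * (if 0 < snd p \<and> snd p < \<tau> (fst p) then 1 else 0)" for p
  have k1m: "k1 \<in> borel_measurable (lborel \<Otimes>\<^sub>M lborel)" unfolding k1_def by measurable
  have k2m: "k2 \<in> borel_measurable (lborel \<Otimes>\<^sub>M lborel)" unfolding k2_def by measurable
  have "(\<integral>\<^sup>+x. ennreal ((norm x)\<^sup>2 * sym_dec_rearr \<tau> x) \<partial>lborel) \<le> (\<integral>\<^sup>+x. ennreal ((norm x)\<^sup>2) * ff \<tau> (x::R3) \<partial>lborel)"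
  proof (rule nn_integral_mono)
    fix x :: R3
    have "ennreal ((norm x)\<^sup>2 * sym_dec_rearr \<tau> x) = ennreal ((norm x)\<^sup>2) * ennreal (enn2real (ff \<tau> x))"
      unfolding rearr_eq[OF \<tau>J] by (rule ennreal_mult) auto
    also have "\<dots> \<le> ennreal ((norm x)\<^sup>2) * ff \<tau> x"
      by (rule mult_left_mono) (auto simp: ennreal_enn2real_if)
    finally show "ennreal ((norm x)\<^sup>2 * sym_dec_rearr \<tau> x) \<le> ennreal ((norm x)\<^sup>2) * ff \<tau> x" .
  qed
  also have "\<dots> = (\<integral>\<^sup>+x. \<integral>\<^sup>+t. k1 (x, t) \<partial>lborel \<partial>lborel)"
  proof (rule nn_integral_cong)
    fix x :: R3
    have "ff \<tau> x = (\<integral>\<^sup>+t. (if 0 < t \<and> norm x < rho' \<tau> t then 1 else 0) \<partial>lborel)"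
    proof -
      have "(\<integral>\<^sup>+t. (if 0 < t \<and> norm x < rho' \<tau> t then 1 else 0) \<partial>lborel) = (\<integral>\<^sup>+t. indicator (Ix \<tau> x) t \<partial>lborel)"
        by (intro nn_integral_cong) (simp add: Ix_def[OF \<tau>J] indicator_def)
      also have "\<dots> = emeasure lborel (Ix \<tau> x)" using Ix_sets[OF \<tau>J, of x] by (intro nn_integral_indicator) simp
      finally show ?thesis unfolding ff_def[OF \<tau>J] by simp
    qed
    then show "ennreal ((norm x)\<^sup>2) * ff \<tau> x = (\<integral>\<^sup>+t. k1 (x, t) \<partial>lborel)"
      unfolding k1_def by (simp add: nn_integral_cmult)
  qed
  also have "\<dots> = (\<integral>\<^sup>+t. \<integral>\<^sup>+x. k1 (x, t) \<partial>lborel \<partial>lborel)"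
    by (rule lborel_pair.Fubini[OF k1m, symmetric])
  also have "\<dots> \<le> (\<integral>\<^sup>+t. \<integral>\<^sup>+x. k2 (x, t) \<partial>lborel \<partial>lborel)"
  proof (rule nn_integral_mono)
    fix t :: real
    show "(\<integral>\<^sup>+x. k1 (x, t) \<partial>lborel) \<le> (\<integral>\<^sup>+x. k2 (x, t) \<partial>lborel)"
    proof (cases "t > 0")
      case False
      then show ?thesis unfolding k1_def k2_def by simp
    next
      case True
      have e1: "(\<integral>\<^sup>+x. k1 (x, t) \<partial>lborel) = (\<integral>\<^sup>+x. ennreal ((norm x)\<^sup>2) * indicator (ball (0::R3) (rho \<tau> t)) x \<partial>lborel)"
        unfolding k1_def using True by (intro nn_integral_cong) (auto simp: rho'_def[OF \<tau>J] indicator_def)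
      have e2: "(\<integral>\<^sup>+x. k2 (x, t) \<partial>lborel) = (\<integral>\<^sup>+x. ennreal ((norm x)\<^sup>2) * indicator {x. \<tau> x > t} x \<partial>lborel)"
        unfolding k2_def using True by (intro nn_integral_cong) (auto simp: indicator_def)
      have A: "{x. \<tau> x > t} \<in> sets lborel" by measurable
      show ?thesis unfolding e1 e2
        by (rule bathtub[OF A rho_prop(1)[OF \<tau>J True] rho_prop(3)[OF \<tau>J True, symmetric]])
    qed
  qed
  also have "\<dots> = (\<integral>\<^sup>+x. \<integral>\<^sup>+t. k2 (x, t) \<partial>lborel \<partial>lborel)"
    by (rule lborel_pair.Fubini[OF k2m])
  also have "\<dots> = (\<integral>\<^sup>+x. ennreal ((norm x)\<^sup>2 * \<tau> x) \<partial>lborel)"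
  proof (rule nn_integral_cong)
    fix x :: R3
    have "(\<integral>\<^sup>+t. (if 0 < t \<and> t < \<tau> x then 1 else 0) \<partial>lborel) = emeasure lborel {0<..<\<tau> x}"
    proof -
      have "(\<integral>\<^sup>+t. (if 0 < t \<and> t < \<tau> x then 1 else 0) \<partial>lborel) = (\<integral>\<^sup>+t. indicator {0<..<\<tau> x} t \<partial>lborel)"
        by (intro nn_integral_cong) (simp add: indicator_def)
      also have "\<dots> = emeasure lborel {0<..<\<tau> x}" by (intro nn_integral_indicator) simp
      finally show ?thesis .
    qed
    also have "\<dots> = ennreal (\<tau> x)" using tau_nn[OF \<tau>J, of x] by simp
    finally have "(\<integral>\<^sup>+t. (if 0 < t \<and> t < \<tau> x then 1 else 0) \<partial>lborel) = ennreal (\<tau> x)" .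
    then show "(\<integral>\<^sup>+t. k2 (x, t) \<partial>lborel) = ennreal ((norm x)\<^sup>2 * \<tau> x)"
      unfolding k2_def using tau_nn[OF \<tau>J, of x] by (simp add: nn_integral_cmult ennreal_mult)
  qed
  finally show ?thesis .
qed

end

definition Fr :: "real \<Rightarrow> real \<Rightarrow> real" where
  "Fr a b = min a b * max a b powr (2/3) - 1/5 * min a b powr (5/3)"

lemma Fr_nn: assumes "a \<ge> 0" "b \<ge> 0" shows "0 \<le> Fr a b"
proof -
  define m where "m = min a b"
  define M where "M = max a b"
  have m: "0 \<le> m" "m \<le> M" unfolding m_def M_def using assms by auto
  have p53: "m powr (5/3) = m * m powr (2/3)"
  proof (cases "m = 0")
    case False
    have e1: "m powr (5/3) = m powr (1 + 2/3)" by simp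
    have e2: "m powr (1 + 2/3) = m powr 1 * m powr (2/3)" by (rule powr_add)
    have e3: "m powr 1 = m" using m(1) by (rule powr_one)
    show ?thesis unfolding e1 e2 e3 ..
  qed simp
  have "m powr (2/3) \<le> M powr (2/3)" using m by (intro powr_mono2) auto
  then have "m * m powr (2/3) \<le> m * M powr (2/3)" using m by (intro mult_left_mono) auto
  moreover have "0 \<le> m * m powr (2/3)" using m by simp
  ultimately show ?thesis unfolding Fr_def m_def[symmetric] M_def[symmetric] p53 by linarith
qed

definition Fe :: "real \<Rightarrow> real \<Rightarrow> ennreal" where
  "Fe a b = ennreal (Fr (max a 0) (max b 0))"

lemma Fe_meas: "(\<lambda>p. Fe (fst p) (snd p)) \<in> borel_measurable (borel \<Otimes>\<^sub>M borel)"
  unfolding Fe_def Fr_def by measurable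

lemma Fe0: "Fe 0 b = 0" "Fe a 0 = 0"
  unfolding Fe_def Fr_def by (auto simp: min_def max_def)

lemma T3_eq:
  fixes \<phi> :: "R3 \<Rightarrow> real"
  assumes [measurable]: "\<phi> \<in> borel_measurable lborel" and nn: "\<And>x. \<phi> x \<ge> 0"
  shows "(\<integral>p. (min (\<phi> (fst p)) (\<phi> (snd p)) * max (\<phi> (fst p)) (\<phi> (snd p)) powr (2/3)
              - 1/5 * min (\<phi> (fst p)) (\<phi> (snd p)) powr (5/3)) \<partial>(lborel \<Otimes>\<^sub>M lborel))
       = enn2real (\<integral>\<^sup>+p. Fe (\<phi> (fst p)) (\<phi> (snd p)) \<partial>(lborel \<Otimes>\<^sub>M lborel))"
proof -
  have eqf: "(\<lambda>p. min (\<phi> (fst p)) (\<phi> (snd p)) * max (\<phi> (fst p)) (\<phi> (snd p)) powr (2/3)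
              - 1/5 * min (\<phi> (fst p)) (\<phi> (snd p)) powr (5/3)) = (\<lambda>p. Fr (\<phi> (fst p)) (\<phi> (snd p)))"
    unfolding Fr_def ..
  have m: "(\<lambda>p. Fr (\<phi> (fst p)) (\<phi> (snd p))) \<in> borel_measurable (lborel \<Otimes>\<^sub>M lborel)"
    unfolding Fr_def by measurable
  have "(\<integral>p. Fr (\<phi> (fst p)) (\<phi> (snd p)) \<partial>(lborel \<Otimes>\<^sub>M lborel)) = enn2real (\<integral>\<^sup>+p. ennreal (Fr (\<phi> (fst p)) (\<phi> (snd p))) \<partial>(lborel \<Otimes>\<^sub>M lborel))"
    by (rule integral_eq_nn_integral[OF m]) (auto intro!: Fr_nn nn)
  also have "(\<integral>\<^sup>+p. ennreal (Fr (\<phi> (fst p)) (\<phi> (snd p))) \<partial>(lborel \<Otimes>\<^sub>M lborel)) = (\<integral>\<^sup>+p. Fe (\<phi> (fst p)) (\<phi> (snd p)) \<partial>(lborel \<Otimes>\<^sub>M lborel))"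
    using nn by (intro nn_integral_cong) (simp add: Fe_def max_absorb1)
  finally show ?thesis unfolding eqf .
qed

lemma T2_eq:
  fixes \<phi> :: "R3 \<Rightarrow> real"
  assumes [measurable]: "\<phi> \<in> borel_measurable lborel" and nn: "\<And>x. \<phi> x \<ge> 0"
  shows "(\<integral>\<xi>. \<phi> \<xi> powr (2/3) \<partial>lborel) = enn2real (\<integral>\<^sup>+\<xi>. ennreal (\<phi> \<xi> powr (2/3)) \<partial>lborel)"
  by (rule integral_eq_nn_integral) auto

lemma T1_eq:
  fixes \<phi> :: "R3 \<Rightarrow> real"
  assumes [measurable]: "\<phi> \<in> borel_measurable lborel" and nn: "\<And>x. \<phi> x \<ge> 0"
  shows "(\<integral>\<xi>. (norm \<xi>)\<^sup>2 * \<phi> \<xi> \<partial>lborel) = enn2real (\<integral>\<^sup>+\<xi>. ennreal ((norm \<xi>)\<^sup>2 * \<phi> \<xi>) \<partial>lborel)"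
  by (rule integral_eq_nn_integral) (auto intro!: AE_I2 mult_nonneg_nonneg nn)

theorem lemma2:
  fixes q :: nat and Z :: real and \<tau> :: "R3 \<Rightarrow> real"
  assumes "q > 0" and "Z > 0" and "\<tau> \<in> J_class"
  shows "E_mTF ((6 * pi\<^sup>2 / real q) powr (2/3)) Z (sym_dec_rearr \<tau>)
         \<le> E_mTF ((6 * pi\<^sup>2 / real q) powr (2/3)) Z \<tau>"
proof -
  note \<tau>J = assms(3)
  define \<sigma> where "\<sigma> = sym_dec_rearr \<tau>"
  have m1[measurable]: "\<tau> \<in> borel_measurable lborel" by (rule tau_meas[OF \<tau>J])
  have m2[measurable]: "\<sigma> \<in> borel_measurable lborel" unfolding \<sigma>_def by (rule rearr_meas[OF \<tau>J])
  have n1: "\<tau> x \<ge> 0" for x by (rule tau_nn[OF \<tau>J])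
  have n2: "\<sigma> x \<ge> 0" for x unfolding \<sigma>_def sym_dec_rearr_def by simp
  have eq: "emeasure lborel {x. \<tau> x > t} = emeasure lborel {x. \<sigma> x > t}" if "t > 0" for t
    unfolding \<sigma>_def using level_eq[OF \<tau>J that] by simp
  have fin: "emeasure lborel {x. \<tau> x > t} \<noteq> \<infinity>" if "t > 0" for t using fin[OF \<tau>J that] .
  have T2: "(\<integral>\<xi>. \<sigma> \<xi> powr (2/3) \<partial>lborel) = (\<integral>\<xi>. \<tau> \<xi> powr (2/3) \<partial>lborel)"
  proof -
    have "(\<integral>\<^sup>+\<xi>. ennreal (\<tau> \<xi> powr (2/3)) \<partial>lborel) = (\<integral>\<^sup>+\<xi>. ennreal (\<sigma> \<xi> powr (2/3)) \<partial>lborel)"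
      by (rule nn_integral_transfer[of \<tau> \<sigma> "\<lambda>u. ennreal (u powr (2/3))"]) (use n1 n2 eq fin in auto)
    then show ?thesis unfolding T2_eq[OF m1 n1] T2_eq[OF m2 n2] by simp
  qed
  have T3: "(\<integral>p. (min (\<sigma> (fst p)) (\<sigma> (snd p)) * max (\<sigma> (fst p)) (\<sigma> (snd p)) powr (2/3)
              - 1/5 * min (\<sigma> (fst p)) (\<sigma> (snd p)) powr (5/3)) \<partial>(lborel \<Otimes>\<^sub>M lborel))
          = (\<integral>p. (min (\<tau> (fst p)) (\<tau> (snd p)) * max (\<tau> (fst p)) (\<tau> (snd p)) powr (2/3)
              - 1/5 * min (\<tau> (fst p)) (\<tau> (snd p)) powr (5/3)) \<partial>(lborel \<Otimes>\<^sub>M lborel))"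
  proof -
    have "(\<integral>\<^sup>+p. Fe (\<tau> (fst p)) (\<tau> (snd p)) \<partial>(lborel \<Otimes>\<^sub>M lborel)) = (\<integral>\<^sup>+p. Fe (\<sigma> (fst p)) (\<sigma> (snd p)) \<partial>(lborel \<Otimes>\<^sub>M lborel))"
      by (rule nn_integral_pair_transfer[OF m1 m2 Fe_meas]) (use Fe0 n1 n2 eq fin in auto)
    then show ?thesis unfolding T3_eq[OF m1 n1] T3_eq[OF m2 n2] by simp
  qed
  have T1: "(\<integral>\<xi>. (norm \<xi>)\<^sup>2 * \<sigma> \<xi> \<partial>lborel) \<le> (\<integral>\<xi>. (norm \<xi>)\<^sup>2 * \<tau> \<xi> \<partial>lborel)"
  proof -
    have "(\<integral>\<^sup>+\<xi>. ennreal ((norm \<xi>)\<^sup>2 * \<tau> \<xi>) \<partial>lborel) \<le> (\<integral>\<^sup>+\<xi>. ennreal ((1 + (norm \<xi>)\<^sup>2) * \<tau> \<xi>) \<partial>lborel)"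
      using n1 by (intro nn_integral_mono ennreal_leI mult_right_mono) auto
    also have "\<dots> = ennreal (\<integral>\<xi>. (1 + (norm \<xi>)\<^sup>2) * \<tau> \<xi> \<partial>lborel)"
      by (rule nn_integral_eq_integral[OF tau_int_w[OF \<tau>J]]) (use n1 in \<open>auto intro!: AE_I2\<close>)
    also have "\<dots> < top" by simp
    finally have ft: "(\<integral>\<^sup>+\<xi>. ennreal ((norm \<xi>)\<^sup>2 * \<tau> \<xi>) \<partial>lborel) < top" .
    have "enn2real (\<integral>\<^sup>+\<xi>. ennreal ((norm \<xi>)\<^sup>2 * \<sigma> \<xi>) \<partial>lborel) \<le> enn2real (\<integral>\<^sup>+\<xi>. ennreal ((norm \<xi>)\<^sup>2 * \<tau> \<xi>) \<partial>lborel)"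
      by (rule enn2real_mono[OF _ ft]) (unfold \<sigma>_def, rule kinetic[OF \<tau>J])
    then show ?thesis unfolding T1_eq[OF m1 n1] T1_eq[OF m2 n2] .
  qed
  show ?thesis unfolding \<sigma>_def[symmetric] E_mTF_def T2 T3 using T1 by linarith
qed

end
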